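(* Let $s\ge1$ and $n\ge k\ge0$ be integers, $\mathcal A$ a linear $[n,k]_q$ code, and $A_n^{\mathcal A}$ the number of codewords of $\mathcal A$ of Hamming weight $n$. Let $\boldsymbol E$ be chosen uniformly at random from the set of matrices in $\mathbb F_q^{s\times n}$ having no all-zero column. Then $$\Pr\{\text{every row of }\boldsymbol E\text{ lies in }\mathcal A\}\le\frac{q^{ks}(q-1)-(q^s-1)(q^k-1-A_n^{\mathcal A})-(q-1)}{(q-1)(q^s-1)^n}.$$ *)

theory Defs
  imports "HOL-Analysis.Analysis" "HOL-Probability.Probability"
begin

text \<open>Hamming weight of a vector in F_q^n (index type 'n with CARD('n) = n).\<close>
definition hamming_weight :: "'a::zero ^ 'n \<Rightarrow> nat" where
  "hamming_weight v = card {j. v $ j \<noteq> 0}"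

definition linear_code :: "('a::field ^ 'n) set \<Rightarrow> nat \<Rightarrow> bool" where
  "linear_code C k \<longleftrightarrow> vec.subspace C \<and> vec.dim C = k"

definition full_weight_count :: "('a::field ^ 'n::finite) set \<Rightarrow> nat" where
  "full_weight_count C = card {v \<in> C. hamming_weight v = CARD('n)}"

text \<open>s x n matrices (rows indexed by 's, columns by 'n) with no all-zero column.\<close>
definition no_zero_column_matrices :: "('a::zero ^ 'n ^ 's) set" where
  "no_zero_column_matrices = {E. \<forall>j. \<exists>i. E $ i $ j \<noteq> 0}"

end

theory Submission
  imports Defs
begin

lemma card_vec_set:
  fixes A :: "'b set"
  assumes "finite A"
  shows "card {v :: 'b ^ 'm::finite. \<forall>i. v $ i \<in> A} = card A ^ CARD('m)"
proof -
  have "bij_betw vec_nth {v :: 'b ^ 'm. \<forall>i. v $ i \<in> A} (PiE UNIV (\<lambda>_. A))"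
  proof (rule bij_betwI')
    show "\<And>x y. x \<in> {v. \<forall>i. v $ i \<in> A} \<Longrightarrow> y \<in> {v. \<forall>i. v $ i \<in> A} \<Longrightarrow> (vec_nth x = vec_nth y) = (x = y)"
      by (auto simp: vec_eq_iff)
    show "\<And>x. x \<in> {v. \<forall>i. v $ i \<in> A} \<Longrightarrow> vec_nth x \<in> PiE UNIV (\<lambda>_. A)" by auto
    show "\<And>y. y \<in> PiE UNIV (\<lambda>_. A) \<Longrightarrow> \<exists>x\<in>{v. \<forall>i. v $ i \<in> A}. y = vec_nth x"
      by (rule_tac x="vec_lambda y" in bexI) auto
  qed
  then have "card {v :: 'b ^ 'm. \<forall>i. v $ i \<in> A} = card (PiE (UNIV::'m set) (\<lambda>_. A))"
    by (rule bij_betw_same_card)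
  also have "\<dots> = card A ^ CARD('m)" by (simp add: card_PiE)
  finally show ?thesis .
qed

lemma card_subspace:
  fixes C :: "('a::{field,finite} ^ 'n::finite) set"
  assumes "vec.subspace C"
  shows "card C = CARD('a) ^ vec.dim C"
proof -
  obtain B where B: "B \<subseteq> C" "vec.independent B" "C \<subseteq> vec.span B" "card B = vec.dim C"
    using vec.basis_exists by blast
  have fB: "finite B" using B(2) vec.finiteI_independent by blast
  have CB: "C = vec.span B" using B assms vec.span_minimal by blast
  define g where "g u = (\<Sum>v\<in>B. u v *s v)" for u :: "'a ^ 'n \<Rightarrow> 'a"
  have inj: "inj_on g (PiE B (\<lambda>_. UNIV))"
  proof (rule inj_onI)
    fix u w assume u: "u \<in> PiE B (\<lambda>_. UNIV)" and w: "w \<in> PiE B (\<lambda>_. UNIV)" and e: "g u = g w"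
    have "(\<Sum>v\<in>B. (u v - w v) *s v) = 0"
      using e by (simp add: g_def vec.scale_left_diff_distrib sum_subtractf)
    then have "\<forall>v\<in>B. u v - w v = 0" using B(2) unfolding vec.independent_explicit
      by (auto dest: spec[of _ "\<lambda>v. u v - w v"])
    then show "u = w" using u w by (auto intro: PiE_ext)
  qed
  have img: "g ` PiE B (\<lambda>_. UNIV) = vec.span B"
  proof
    show "g ` PiE B (\<lambda>_. UNIV) \<subseteq> vec.span B"
      using vec.span_finite[OF fB] by (auto simp: g_def)
    show "vec.span B \<subseteq> g ` PiE B (\<lambda>_. UNIV)"
    proof
      fix x assume "x \<in> vec.span B"
      then obtain u where x: "x = (\<Sum>v\<in>B. u v *s v)" using vec.span_finite[OF fB] by auto
      have "g (restrict u B) = x" unfolding g_def x by (rule sum.cong) auto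
      moreover have "restrict u B \<in> PiE B (\<lambda>_. UNIV)" by auto
      ultimately show "x \<in> g ` PiE B (\<lambda>_. UNIV)" by blast
    qed
  qed
  have "card C = card (PiE B (\<lambda>_. UNIV :: 'a set))"
    using card_image[OF inj] img CB by simp
  also have "\<dots> = CARD('a) ^ card B" using fB by (simp add: card_PiE)
  finally show ?thesis using B(4) by simp
qed

lemma fiber_bound:
  fixes a a' :: "'a::field ^ 's" and c c' :: "'a ^ 'n"
  assumes "a \<noteq> 0" "c \<noteq> 0" "\<forall>i j. a' $ i * c' $ j = a $ i * c $ j"
  shows "\<exists>l. l \<noteq> 0 \<and> a' = l *s a \<and> c' = inverse l *s c"
proof -
  obtain i where i: "a $ i \<noteq> 0" using assms(1) by (metis vec_eq_iff zero_index)
  obtain j where j: "c $ j \<noteq> 0" using assms(2) by (metis vec_eq_iff zero_index)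
  have ij: "a' $ i * c' $ j = a $ i * c $ j" using assms(3) by blast
  then have cj: "c' $ j \<noteq> 0" and ai: "a' $ i \<noteq> 0" using i j by auto
  define l where "l = c $ j / c' $ j"
  have l0: "l \<noteq> 0" using j cj by (simp add: l_def)
  have A: "a' = l *s a"
  proof (subst vec_eq_iff, intro allI)
    fix t have "a' $ t * c' $ j = a $ t * c $ j" using assms(3) by blast
    then show "a' $ t = (l *s a) $ t" using cj by (simp add: l_def field_simps)
  qed
  have Cc: "c' = inverse l *s c"
  proof (subst vec_eq_iff, intro allI)
    fix t have "a' $ i * c' $ t = a $ i * c $ t" using assms(3) by blast
    then have "l * a $ i * c' $ t = a $ i * c $ t" using A by simp
    then have "l * c' $ t = c $ t" using i by (metis mult.commute mult.left_commute mult_left_cancel)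
    then show "c' $ t = (inverse l *s c) $ t" using l0 by (auto simp: field_simps)
  qed
  show ?thesis using l0 A Cc by blast
qed

theorem mainTheorem18:
  fixes C :: "('a::{field,finite} ^ 'n::finite) set"
    and k :: nat
  assumes "linear_code C k"
  defines "q \<equiv> real CARD('a)"
    and "s \<equiv> CARD('s::finite)"
    and "n \<equiv> CARD('n)"
  shows "measure_pmf.prob (pmf_of_set (no_zero_column_matrices :: ('a ^ 'n ^ 's) set))
           {E. \<forall>i. E $ i \<in> C}
         \<le> (q ^ (k * s) * (q - 1) - (q ^ s - 1) * (q ^ k - 1 - real (full_weight_count C)) - (q - 1))
           / ((q - 1) * (q ^ s - 1) ^ n)"
proof -
  have sub: "vec.subspace C" and dimC: "vec.dim C = k" using assms(1) by (auto simp: linear_code_def)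
  define NZ where "NZ = (no_zero_column_matrices :: ('a ^ 'n ^ 's) set)"
  define R where "R = {E :: 'a ^ 'n ^ 's. \<forall>i. E $ i \<in> C}"
  define Z where "Z = (UNIV :: ('a ^ 's) set) - {0}"
  define W where "W = {v \<in> C. hamming_weight v = CARD('n)}"
  define F where "F = C - {0} - W"
  define D where "D = Z \<times> F"
  define g where "g = (\<lambda>(a :: 'a ^ 's, c :: 'a ^ 'n). (\<chi> i. a $ i *s c) :: 'a ^ 'n ^ 's)"
  have gij: "g (a, c) $ i $ j = a $ i * c $ j" for a c i j by (simp add: g_def)
  have q2: "CARD('a) \<ge> 2"
  proof -
    have "(0::'a) \<noteq> 1" by simp
    then have "card {0::'a, 1} \<le> CARD('a)" by (intro card_mono) auto
    then show ?thesis by simp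
  qed
  have cardC: "card C = CARD('a) ^ k" using card_subspace[OF sub] dimC by simp
  have cardZ: "card Z = CARD('a) ^ s - 1" by (simp add: Z_def s_def)
  have NZT: "transpose ` NZ = {T :: 'a ^ 's ^ 'n. \<forall>j. T $ j \<in> Z}"
  proof
    show "transpose ` NZ \<subseteq> {T. \<forall>j. T $ j \<in> Z}"
      by (auto simp: NZ_def no_zero_column_matrices_def Z_def transpose_def vec_eq_iff)
    show "{T. \<forall>j. T $ j \<in> Z} \<subseteq> transpose ` NZ"
    proof
      fix T :: "'a ^ 's ^ 'n" assume "T \<in> {T. \<forall>j. T $ j \<in> Z}"
      then have "transpose T \<in> NZ"
        by (auto simp: NZ_def no_zero_column_matrices_def Z_def transpose_def vec_eq_iff)
      then show "T \<in> transpose ` NZ" by (metis image_eqI transpose_transpose)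
    qed
  qed
  have "inj_on transpose NZ" by (metis inj_onI transpose_transpose)
  then have cardNZ: "card NZ = (CARD('a) ^ s - 1) ^ n"
  proof -
    have "card NZ = card (transpose ` NZ)" using \<open>inj_on transpose NZ\<close> by (simp add: card_image)
    also have "\<dots> = card Z ^ CARD('n)" unfolding NZT by (rule card_vec_set) simp
    finally show ?thesis using cardZ n_def by simp
  qed
  have cardR: "card R = CARD('a) ^ (k * s)"
    using card_vec_set[of C] cardC by (simp add: R_def s_def power_mult)
  have fin: "finite X" for X :: "('a ^ 'n ^ 's) set" by simp
  have gR: "g ` D \<subseteq> R - NZ"
  proof
    fix E assume "E \<in> g ` D"
    then obtain a c where ac: "a \<in> Z" "c \<in> F" "E = g (a, c)" by (auto simp: D_def)
    have "c \<in> C" using ac(2) by (simp add: F_def)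
    then have "E \<in> R" using ac(3) sub by (auto simp: R_def g_def vec.subspace_scale)
    moreover have "{j. c $ j \<noteq> 0} \<noteq> UNIV"
    proof
      assume "{j. c $ j \<noteq> 0} = UNIV"
      then have "hamming_weight c = CARD('n)" by (simp add: hamming_weight_def)
      then show False using ac(2) \<open>c \<in> C\<close> by (simp add: F_def W_def)
    qed
    then obtain j where "c $ j = 0" by auto
    then have "E \<notin> NZ" using ac(3) by (auto simp: NZ_def no_zero_column_matrices_def gij)
    ultimately show "E \<in> R - NZ" by blast
  qed
  have g0: "0 \<notin> g ` D"
  proof
    assume "0 \<in> g ` D"
    then obtain a c where ac: "a \<in> Z" "c \<in> F" "0 = g (a, c)" by (auto simp: D_def)
    obtain i where i: "a $ i \<noteq> 0" using ac(1) by (metis Z_def DiffE insertI1 vec_eq_iff zero_index)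
    obtain j where j: "c $ j \<noteq> 0" using ac(2) by (metis F_def DiffE insertI1 vec_eq_iff zero_index)
    have "g (a, c) $ i $ j \<noteq> 0" using i j by (simp add: gij)
    then show False using ac(3) by (metis zero_index)
  qed
  have R0: "0 \<in> R - NZ"
    using sub by (auto simp: R_def NZ_def no_zero_column_matrices_def vec.subspace_0)
  have bad: "card (g ` D) + 1 \<le> card (R - NZ)"
  proof -
    have "card (insert 0 (g ` D)) \<le> card (R - NZ)" using gR R0 by (intro card_mono) auto
    then show ?thesis using g0 by simp
  qed
  have good: "card (NZ \<inter> R) + card (R - NZ) = card R"
  proof -
    have "R = (NZ \<inter> R) \<union> (R - NZ)" by blast
    then have "card R = card ((NZ \<inter> R) \<union> (R - NZ))" by simp
    also have "\<dots> = card (NZ \<inter> R) + card (R - NZ)" by (rule card_Un_disjoint) auto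
    finally show ?thesis by simp
  qed
  have fib: "card {x \<in> D. g x = y} \<le> CARD('a) - 1" if yD: "y \<in> g ` D" for y
  proof -
    obtain x0 where x0: "x0 \<in> D" "y = g x0" using yD by blast
    obtain a c where ac0: "x0 = (a, c)" by (cases x0)
    have ac: "(a, c) \<in> D" "y = g (a, c)" using x0 ac0 by auto
    have a0: "a \<noteq> 0" and c0: "c \<noteq> 0" using ac(1) by (auto simp: D_def Z_def F_def)
    have "{x \<in> D. g x = y} \<subseteq> (\<lambda>l. (l *s a, inverse l *s c)) ` (UNIV - {0})"
    proof
      fix x assume "x \<in> {x \<in> D. g x = y}"
      then have xD: "x \<in> D" and gx: "g x = g (a, c)" using ac(2) by auto
      obtain a' c' where x1: "x = (a', c')" by (cases x)
      have x: "x = (a', c')" "g (a', c') = g (a, c)" using x1 gx by auto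
      have "\<forall>i j. a' $ i * c' $ j = a $ i * c $ j"
      proof (intro allI)
        fix i j
        have "g (a', c') $ i $ j = g (a, c) $ i $ j" using x(2) by simp
        then show "a' $ i * c' $ j = a $ i * c $ j" by (simp only: gij)
      qed
      then obtain l where "l \<noteq> 0" "a' = l *s a" "c' = inverse l *s c"
        using fiber_bound[OF a0 c0] by blast
      then show "x \<in> (\<lambda>l. (l *s a, inverse l *s c)) ` (UNIV - {0})" using x by auto
    qed
    then have "card {x \<in> D. g x = y} \<le> card ((\<lambda>l. (l *s a, inverse l *s c)) ` (UNIV - {0::'a}))"
      by (intro card_mono) auto
    also have "\<dots> \<le> card (UNIV - {0::'a})" by (rule card_image_le) simp
    also have "\<dots> = CARD('a) - 1" by simp
    finally show ?thesis .
  qed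
  have Dfib: "D = (\<Union>y\<in>g ` D. {x \<in> D. g x = y})" by auto
  have "card D \<le> (\<Sum>y\<in>g ` D. card {x \<in> D. g x = y})"
    by (subst Dfib) (rule card_UN_le, simp)
  also have "\<dots> \<le> (\<Sum>y\<in>g ` D. CARD('a) - 1)" by (rule sum_mono) (rule fib)
  also have "\<dots> = (CARD('a) - 1) * card (g ` D)" by simp
  finally have Dle: "card D \<le> (CARD('a) - 1) * card (g ` D)" .
  have n1: "CARD('n) \<noteq> 0" by simp
  have W0: "0 \<notin> W" using n1 by (simp add: W_def hamming_weight_def)
  have WC: "W \<subseteq> C" by (auto simp: W_def)
  have cardF: "card F + 1 + full_weight_count C = card C"
  proof -
    have "F = C - insert 0 W" by (auto simp: F_def)
    moreover have "insert 0 W \<subseteq> C" using WC sub vec.subspace_0 by blast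
    moreover have "card (insert 0 W) = 1 + full_weight_count C"
      using W0 by (simp add: W_def full_weight_count_def)
    ultimately show ?thesis using card_Diff_subset[of "insert 0 W" C] card_mono[of C "insert 0 W"]
      by (simp add: finite_subset)
  qed
  have cardD: "card D = card Z * card F" by (simp add: D_def card_cartesian_product)
  have pow1: "1 < CARD('a) ^ s" using q2 by (intro one_less_power) (auto simp: s_def)
  have NZne: "NZ \<noteq> {}"
  proof -
    have "card NZ > 0" unfolding cardNZ using pow1 by simp
    then show ?thesis by auto
  qed
  have prob: "measure_pmf.prob (pmf_of_set NZ) R = card (NZ \<inter> R) / card NZ"
    using NZne by (simp add: measure_pmf_of_set)
  define P where "P = real (card (NZ \<inter> R))"
  define X where "X = real (card (g ` D))"
  define A where "A = real (full_weight_count C)"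
  have qr: "q \<ge> 2" using q2 q_def by simp
  have Zr: "real (card Z) = q ^ s - 1" using cardZ pow1 by (simp add: of_nat_diff q_def)
  have Fr0: "real (card F) + 1 + A = real (card C)" using cardF unfolding A_def by (metis of_nat_add of_nat_1)
  have Fr: "real (card F) = q ^ k - 1 - A" using Fr0 cardC by (simp add: q_def)
  have NZr: "real (card NZ) = (q ^ s - 1) ^ n" using cardNZ Zr cardZ by simp
  have P0: "card (NZ \<inter> R) + card (g ` D) + 1 \<le> CARD('a) ^ (k * s)" using bad good cardR by linarith
  have P1: "P + X + 1 \<le> q ^ (k * s)"
  proof -
    have "real (card (NZ \<inter> R) + card (g ` D) + 1) \<le> real (CARD('a) ^ (k * s))" using P0 by (rule of_nat_mono)
    then show ?thesis by (simp add: P_def X_def q_def)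
  qed
  have P2: "(q ^ s - 1) * (q ^ k - 1 - A) \<le> (q - 1) * X"
  proof -
    have "card Z * card F \<le> (CARD('a) - 1) * card (g ` D)" using Dle cardD by simp
    then have "real (card Z * card F) \<le> real ((CARD('a) - 1) * card (g ` D))" by (rule of_nat_mono)
    moreover have "real (CARD('a) - 1) = q - 1" using q2 by (simp add: of_nat_diff q_def)
    ultimately show ?thesis using Zr Fr by (simp add: X_def)
  qed
  have qs0: "q ^ s - 1 > 0"
  proof -
    have "real 1 < real (CARD('a) ^ s)" using pow1 by (simp only: of_nat_less_iff)
    then show ?thesis by (simp add: q_def)
  qed
  have Npos: "(q ^ s - 1) ^ n > 0" using qs0 by simp
  have "P / (q ^ s - 1) ^ n = ((q - 1) * P) / ((q - 1) * (q ^ s - 1) ^ n)" using qr by simp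
  also have "\<dots> \<le> (q ^ (k * s) * (q - 1) - (q ^ s - 1) * (q ^ k - 1 - A) - (q - 1)) / ((q - 1) * (q ^ s - 1) ^ n)"
  proof (rule divide_right_mono)
    have "(q - 1) * P \<le> (q - 1) * (q ^ (k * s) - X - 1)" using P1 qr by (intro mult_left_mono) auto
    then show "(q - 1) * P \<le> q ^ (k * s) * (q - 1) - (q ^ s - 1) * (q ^ k - 1 - A) - (q - 1)"
      using P2 by (simp add: algebra_simps)
    show "0 \<le> (q - 1) * (q ^ s - 1) ^ n" using qr Npos by simp
  qed
  finally show ?thesis using prob NZr by (simp add: P_def A_def NZ_def R_def)
qed

end
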